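(* Let $f:\Omega\to\mathbb{R}$ and $\psi:\mathbb{R}^n\to\mathbb{R}$ be given, and let $v_h,w_h\in\mathbb{V}_h$ satisfy $\mathcal{G}_h[v_h](x_i)\ge\mathcal{G}_h[w_h](x_i)$ for all $x_i\in\mathcal{N}_h^0$. Then $v_h\ge w_h$ in $\Omega$.
   Context: Let $n\ge1$, $s\in(0,1)$, and let $\Omega\subset\mathbb{R}^n$ be a bounded polygonal/polyhedral Lipschitz domain satisfying the exterior ball condition, with a conforming simplicial triangulation $\mathcal{T}_h$. Let $x_1,\dots,x_N$ be the interior nodes (nodes not on $\partial\Omega$), $\mathcal{N}_h^0$ their set, $\delta_i=\mathrm{dist}(x_i,\partial\Omega)$, and $h_i$ the local mesh size at $x_i$. Let $\mathbb{V}_h=\{v\in C(\mathbb{R}^n): v|_T\text{ affine for all }T\in\mathcal{T}_h,\ v=0\text{ on }\Omega^c\}$. For each interior node $x_i$ fix $H_i>0$ (typically $H_i=h_i^{\alpha_i}\delta_i^{1-\alpha_i}$, $\alpha_i\in[0,1]$), a star-shaped domain $\Omega_i\subset\Omega$ centered at $x_i$ containing the points $x_i\pm H_ie_j$ (e.g. the cube $x_i+[-H_i,H_i]^n$) and satisfying the symmetry conditions of Han–Wu–Zhou's monotone discretization, and a constant $\kappa_{n,s,i}>0$. For $v\in\mathbb{V}_h$ define $$(-\Delta)^s_h[v](x_i):=-\kappa_{n,s,i}\frac{\Delta_{FD}v(x_i;H_i)}{H_i^{2s}}+\int_{\Omega_i^c}\frac{v(x_i)-v(y)}{|x_i-y|^{n+2s}}\,dy,\qquad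 \Delta_{FD}v(x_i;H_i)=\sum_{j=1}^n\big(v(x_i+H_ie_j)-2v(x_i)+v(x_i-H_ie_j)\big),$$ where $e_j$ are the coordinate unit vectors. Standing fact (discrete barrier function): the function $b_h\in\mathbb{V}_h$ with $b_h(x_i)=1$ for all interior nodes satisfies $(-\Delta)^s_h[b_h](x_i)\ge C\delta_i^{-2s}>0$ for all $x_i\in\mathcal{N}_h^0$, with $C>0$ depending only on $s$ and $\Omega$. The discrete obstacle operator is $$\mathcal{G}_h[v_h](x_i):=\min\{(-\Delta)^s_h[v_h](x_i)-f(x_i),\ v_h(x_i)-\psi(x_i)\},\quad x_i\in\mathcal{N}_h^0.$$ *)

theory Defs
  imports "HOL-Analysis.Analysis"
begin

text \<open>Bounded Lipschitz domain: locally, after a rigid motion, the region below the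
  graph of a Lipschitz function of the remaining coordinates (the function g does not
  depend on coordinate k).\<close>
definition lipschitz_domain :: "(real^'n) set \<Rightarrow> bool" where
  "lipschitz_domain \<Omega> \<longleftrightarrow> open \<Omega> \<and> connected \<Omega> \<and> bounded \<Omega> \<and>
     (\<forall>z\<in>frontier \<Omega>. \<exists>r>0. \<exists>(Q::real^'n \<Rightarrow> real^'n) (k::'n) (L::real) (g::real^'n \<Rightarrow> real).
        orthogonal_transformation Q \<and> L-lipschitz_on UNIV g \<and>
        (\<forall>(y::real^'n) (t::real). g (\<chi> i. if i = k then t else y $ i) = g y) \<and>
        (\<forall>x\<in>ball z r. x \<in> \<Omega> \<longleftrightarrow> (Q (x - z)) $ k < g (Q (x - z))))"

definition exterior_ball_condition :: "(real^'n) set \<Rightarrow> bool" where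
  "exterior_ball_condition \<Omega> \<longleftrightarrow>
     (\<exists>r>0. \<forall>z\<in>frontier \<Omega>. \<exists>c::real^'n. dist c z = r \<and> ball c r \<inter> \<Omega> = {})"

definition conforming_triangulation :: "(real^'n) set \<Rightarrow> (real^'n) set set \<Rightarrow> bool" where
  "conforming_triangulation \<Omega> \<T> \<longleftrightarrow> finite \<T> \<and>
     (\<forall>T\<in>\<T>. int CARD('n) simplex T) \<and>
     (\<forall>T\<in>\<T>. \<forall>T'\<in>\<T>. (T \<inter> T') face_of T \<and> (T \<inter> T') face_of T') \<and>
     \<Union>\<T> = closure \<Omega>"

definition mesh_nodes :: "(real^'n) set set \<Rightarrow> (real^'n) set" where
  "mesh_nodes \<T> = {x. \<exists>T\<in>\<T>. x extreme_point_of T}"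

definition interior_nodes :: "(real^'n) set \<Rightarrow> (real^'n) set set \<Rightarrow> (real^'n) set" where
  "interior_nodes \<Omega> \<T> = mesh_nodes \<T> - frontier \<Omega>"

definition Vh :: "(real^'n) set \<Rightarrow> (real^'n) set set \<Rightarrow> (real^'n \<Rightarrow> real) set" where
  "Vh \<Omega> \<T> = {v. continuous_on UNIV v \<and>
      (\<forall>T\<in>\<T>. \<exists>a c. \<forall>x\<in>T. v x = inner a x + c) \<and>
      (\<forall>x. x \<notin> \<Omega> \<longrightarrow> v x = 0)}"

definition reflect_coord :: "'n \<Rightarrow> real^'n \<Rightarrow> real^'n" where
  "reflect_coord k z = (\<chi> i. if i = k then - z $ i else z $ i)"

definition swap_coords :: "'n \<Rightarrow> 'n \<Rightarrow> real^'n \<Rightarrow> real^'n" where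
  "swap_coords a b z = (\<chi> i. z $ (if i = a then b else if i = b then a else i))"

definition admissible_local_data ::
  "(real^'n) set \<Rightarrow> (real^'n) set set \<Rightarrow> (real^'n \<Rightarrow> real) \<Rightarrow> (real^'n \<Rightarrow> real)
     \<Rightarrow> (real^'n \<Rightarrow> (real^'n) set) \<Rightarrow> bool" where
  "admissible_local_data \<Omega> \<T> H \<kappa> Om \<longleftrightarrow>
     (\<forall>x\<in>interior_nodes \<Omega> \<T>. H x > 0 \<and> \<kappa> x > 0 \<and>
        open (Om x) \<and> x \<in> Om x \<and> Om x \<subseteq> \<Omega> \<and>
        (\<forall>y\<in>Om x. closed_segment x y \<subseteq> Om x) \<and>
        (\<forall>j. x + H x *\<^sub>R axis j 1 \<in> Om x \<and> x - H x *\<^sub>R axis j 1 \<in> Om x) \<and>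
        (\<forall>z k. x + z \<in> Om x \<longrightarrow> x + reflect_coord k z \<in> Om x) \<and>
        (\<forall>z a b. x + z \<in> Om x \<longrightarrow> x + swap_coords a b z \<in> Om x))"

definition Delta_FD :: "(real^'n \<Rightarrow> real) \<Rightarrow> real^'n \<Rightarrow> real \<Rightarrow> real" where
  "Delta_FD v x h = (\<Sum>j\<in>UNIV. v (x + h *\<^sub>R axis j 1) - 2 * v x + v (x - h *\<^sub>R axis j 1))"

definition frac_lap_h ::
  "real \<Rightarrow> (real^'n \<Rightarrow> real) \<Rightarrow> (real^'n \<Rightarrow> real) \<Rightarrow> (real^'n \<Rightarrow> (real^'n) set)
     \<Rightarrow> (real^'n \<Rightarrow> real) \<Rightarrow> real^'n \<Rightarrow> real" where
  "frac_lap_h s \<kappa> H Om v x =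
     - \<kappa> x * Delta_FD v x (H x) / (H x) powr (2 * s)
     + (LINT y : - Om x | lebesgue. (v x - v y) / norm (x - y) powr (real CARD('n) + 2 * s))"

definition obstacle_op_h ::
  "real \<Rightarrow> (real^'n \<Rightarrow> real) \<Rightarrow> (real^'n \<Rightarrow> real) \<Rightarrow> (real^'n \<Rightarrow> (real^'n) set)
     \<Rightarrow> (real^'n \<Rightarrow> real) \<Rightarrow> (real^'n \<Rightarrow> real) \<Rightarrow> (real^'n \<Rightarrow> real) \<Rightarrow> real^'n \<Rightarrow> real" where
  "obstacle_op_h s \<kappa> H Om f \<psi> v x = min (frac_lap_h s \<kappa> H Om v x - f x) (v x - \<psi> x)"

end

theory Submission
  imports Defs
begin
lemma borel_to_lebesgue: "f \<in> borel_measurable borel \<Longrightarrow> f \<in> borel_measurable lebesgue"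
  by (rule measurable_completion) (simp add: measurable_lborel2)

lemma kernel_integrable:
  fixes x :: "'a::euclidean_space" and r p :: real
  assumes r: "r > 0" and p: "p > real DIM('a)"
  shows "integrable lebesgue (\<lambda>y. indicator {y. r \<le> norm (x - y)} y * norm (x - y) powr (-p))"
proof -
  let ?f = "\<lambda>y. indicator {y. r \<le> norm (x - y)} y * norm (x - y) powr (-p) :: real"
  define n where "n = DIM('a)"
  define q where "q = 2 powr (real n - p)"
  define A where "A = r powr (-p) * 2^n * r^n"
  have q0: "0 < q" "q < 1"
  proof -
    show "0 < q" by (simp add: q_def)
    have "q < 2 powr 0" unfolding q_def using p n_def by (intro powr_less_mono) auto
    then show "q < 1" by simp
  qed
  define c where "c k = r powr (-p) * (2 powr (-p))^k" for k::nat
  define R where "R k = 2^(Suc k) * r" for k::nat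
  define g where "g y = (\<Sum>k. ennreal (c k) * indicator (ball x (R k)) y)" for y
  have meas: "?f \<in> borel_measurable lebesgue"
    by (rule borel_to_lebesgue) measurable
  have bound: "ennreal (?f y) \<le> g y" for y
  proof (cases "r \<le> norm (x - y)")
    case False then show ?thesis by simp
  next
    case True
    define d where "d = norm (x-y)"
    have d: "d \<ge> r" "d > 0" using True r by (auto simp: d_def)
    define k where "k = nat \<lfloor>log 2 (d / r)\<rfloor>"
    have l0: "log 2 (d/r) \<ge> 0" using d r by simp
    have k1: "2 powr real k \<le> d / r"
    proof -
      have "real k \<le> log 2 (d/r)" unfolding k_def using l0 by linarith
      then show ?thesis using le_log_iff[of 2 "d/r" "real k"] d r by simp
    qed
    have k2: "d / r < 2 powr real (Suc k)"
    proof -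
      have "log 2 (d/r) < real (Suc k)" unfolding k_def using l0 by linarith
      moreover have "0 < d / r" using d r by simp
      ultimately show ?thesis using le_log_iff[of 2 "d/r" "real (Suc k)"] by linarith
    qed
    have k1': "2^k * r \<le> d" using k1 r by (simp add: powr_realpow field_simps)
    have k2': "d < 2^Suc k * r"
    proof -
      have "2 powr real (Suc k) = 2 ^ Suc k" by (rule powr_realpow) simp
      then show ?thesis using k2 r by (simp add: field_simps del: power_Suc of_nat_Suc)
    qed
    have pos: "0 < 2^k * r" using r by simp
    have "?f y = d powr (-p)" using True by (simp add: d_def)
    also have "\<dots> \<le> (2^k * r) powr (-p)" using pos k1' p by (intro powr_mono2') auto
    also have "\<dots> = c k"
      using r by (simp add: c_def powr_mult powr_power powr_realpow[symmetric] powr_powr mult.commute)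
    finally have fc: "?f y \<le> c k" .
    have yin: "y \<in> ball x (R k)" using k2' by (simp add: R_def d_def dist_norm)
    have "ennreal (?f y) \<le> ennreal (c k) * indicator (ball x (R k)) y"
      using fc yin by (simp add: ennreal_leI)
    also have "\<dots> \<le> g y"
    proof -
      let ?F = "\<lambda>i. ennreal (c i) * indicator (ball x (R i)) y"
      have "sum ?F {k} \<le> suminf ?F" by (intro sum_le_suminf summableI) auto
      moreover have "sum ?F {k} = ?F k"
        by (simp only: sum.insert finite.emptyI empty_iff not_False_eq_True sum.empty add_0_right)
      ultimately show ?thesis unfolding g_def by simp
    qed
    finally show ?thesis .
  qed
  have U: "emeasure lebesgue (ball (0::'a) 1) < \<infinity>"
    using emeasure_lborel_ball_finite[of "0::'a" 1] by simp
  have ck: "c k * R k ^ n = A * q^k" for k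
  proof -
    have q1: "q = 2 powr (-p) * 2 powr real n" by (simp add: q_def powr_add[symmetric])
    have q2: "2 powr real n = (2::real)^n" by (rule powr_realpow) simp
    have "(2 powr (-p))^k * (2^n)^k = q^k"
      unfolding q1 q2 by (simp only: power_mult_distrib)
    moreover have "(2^(Suc k) * r)^n = 2^n * (2^n)^k * r^n"
      by (simp add: power_mult_distrib power_add[symmetric] power_mult[symmetric] mult.commute)
    ultimately have "c k * R k ^ n = r powr (-p) * 2^n * r^n * ((2 powr (-p))^k * (2^n)^k)"
      by (simp add: c_def R_def del: power_Suc)
    also have "\<dots> = A * q^k" using \<open>(2 powr (-p))^k * (2^n)^k = q^k\<close> by (simp add: A_def)
    finally show ?thesis .
  qed
  have "(\<integral>\<^sup>+y. ennreal (?f y) \<partial>lebesgue) \<le> (\<integral>\<^sup>+y. g y \<partial>lebesgue)"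
    by (rule nn_integral_mono) (rule bound)
  also have "\<dots> = (\<Sum>k. ennreal (c k) * emeasure lebesgue (ball x (R k)))"
    unfolding g_def
  proof (subst nn_integral_suminf)
    fix i
    show "(\<lambda>y. ennreal (c i) * indicator (ball x (R i)) y) \<in> borel_measurable lebesgue"
      by (intro borel_to_lebesgue borel_measurable_times_ennreal borel_measurable_const borel_measurable_indicator) simp
  qed (auto simp: nn_integral_cmult_indicator)
  also have "\<dots> = (\<Sum>k. ennreal (A * q^k) * emeasure lebesgue (ball (0::'a) 1))"
  proof (rule suminf_cong)
    fix k
    have "R k \<ge> 0" using r by (simp add: R_def)
    then have "emeasure lebesgue (ball x (R k)) = ennreal (R k ^ n) * emeasure lebesgue (ball (0 :: 'a) 1)"
      unfolding n_def by (rule emeasure_lebesgue_ball_conv_unit_ball)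
    moreover have "c k \<ge> 0" using r by (simp add: c_def)
    moreover have "R k ^ n \<ge> 0" using \<open>R k \<ge> 0\<close> by simp
    ultimately show "ennreal (c k) * emeasure lebesgue (ball x (R k)) = ennreal (A * q^k) * emeasure lebesgue (ball (0::'a) 1)"
      by (simp add: ck[symmetric] ennreal_mult' mult.assoc)
  qed
  also have "\<dots> = (\<Sum>k. ennreal (A * q^k)) * emeasure lebesgue (ball (0::'a) 1)"
    using ennreal_suminf_cmult[of "emeasure lebesgue (ball (0::'a) 1)" "\<lambda>k. ennreal (A * q^k)"]
    by (simp add: mult.commute)
  also have "(\<Sum>k. ennreal (A * q^k)) = ennreal (A * (1 / (1 - q)))"
    using q0 r by (intro suminf_ennreal_eq sums_mult geometric_sums) (auto simp: A_def)
  also have "ennreal (A * (1 / (1 - q))) * emeasure lebesgue (ball (0::'a) 1) < \<infinity>"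
    using U by (simp add: ennreal_mult_less_top)
  finally have fin: "(\<integral>\<^sup>+y. ennreal (?f y) \<partial>lebesgue) < \<infinity>" .
  show ?thesis
    by (rule integrableI_nonneg[OF meas _ fin]) auto
qed


lemma Vh_bounded:
  fixes u :: "real^'n \<Rightarrow> real"
  assumes "u \<in> Vh \<Omega> \<T>" "bounded \<Omega>"
  shows "\<exists>B\<ge>0. \<forall>y. \<bar>u y\<bar> \<le> B"
proof -
  have c: "continuous_on (closure \<Omega>) u" using assms(1) unfolding Vh_def
    using continuous_on_subset by blast
  have "compact (closure \<Omega>)" using assms(2) by (simp add: compact_closure)
  then have "compact (u ` closure \<Omega>)" by (rule compact_continuous_image[OF c])
  then have "bounded (u ` closure \<Omega>)" by (rule compact_imp_bounded)
  then obtain B where B: "\<forall>z\<in>u ` closure \<Omega>. norm z \<le> B" by (auto simp: bounded_iff)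
  have "\<forall>y. \<bar>u y\<bar> \<le> max B 0"
  proof
    fix y
    show "\<bar>u y\<bar> \<le> max B 0"
    proof (cases "y \<in> \<Omega>")
      case True then have "y \<in> closure \<Omega>" using closure_subset by blast
      then show ?thesis using B by fastforce
    next
      case False then show ?thesis using assms(1) by (simp add: Vh_def)
    qed
  qed
  then show ?thesis by (intro exI[of _ "max B 0"]) auto
qed

lemma integrand_integrable:
  fixes u :: "real^'n \<Rightarrow> real" and UU :: "(real^'n) set"
  assumes "u \<in> Vh \<Omega> \<T>" "bounded \<Omega>" "open UU" "x \<in> UU" "p > real CARD('n)"
  shows "integrable lebesgue (\<lambda>y. indicator (- UU) y *\<^sub>R ((u x - u y) / norm (x - y) powr p))"
proof -
  obtain B where B: "B \<ge> 0" "\<And>y. \<bar>u y\<bar> \<le> B" using Vh_bounded[OF assms(1,2)] by blast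
  obtain r where r: "r > 0" "ball x r \<subseteq> UU" using assms(3,4) open_contains_ball by blast
  have K: "integrable lebesgue (\<lambda>y. indicator {y. r \<le> norm (x - y)} y * norm (x - y) powr (-p))"
    using kernel_integrable[of r p x] r assms(5) by simp
  have ucont: "continuous_on UNIV u" using assms(1) by (simp add: Vh_def)
  note [measurable] = borel_measurable_continuous_onI[OF ucont]
  have Oc: "- UU \<in> sets borel" using assms(3) by (simp add: borel_closed closed_Compl)
  have K2: "integrable lebesgue (\<lambda>y. 2 * B * (indicator {y. r \<le> norm (x - y)} y * norm (x - y) powr - p))"
    using K by simp
  show ?thesis
  proof (rule Bochner_Integration.integrable_bound[OF K2])
    show "(\<lambda>y. indicator (- UU) y *\<^sub>R ((u x - u y) / norm (x - y) powr p)) \<in> borel_measurable lebesgue"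
      by (rule borel_to_lebesgue) (use Oc in measurable)
    show "AE y in lebesgue. norm (indicator (- UU) y *\<^sub>R ((u x - u y) / norm (x - y) powr p))
        \<le> norm (2 * B * (indicator {y. r \<le> norm (x - y)} y * norm (x - y) powr - p))"
    proof (rule AE_I2)
      fix y
      show "norm (indicator (- UU) y *\<^sub>R ((u x - u y) / norm (x - y) powr p))
        \<le> norm (2 * B * (indicator {y. r \<le> norm (x - y)} y * norm (x - y) powr - p))"
      proof (cases "y \<in> UU")
        case True then show ?thesis by simp
      next
        case False
        then have "y \<notin> ball x r" using r by blast
        then have d: "norm (x - y) \<ge> r" by (simp add: dist_norm not_less)
        have dp: "norm (x - y) > 0" using d r by linarith
        have "\<bar>u x - u y\<bar> \<le> 2 * B" using B(2)[of x] B(2)[of y] by linarith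
        then have "\<bar>u x - u y\<bar> / norm (x - y) powr p \<le> 2 * B / norm (x - y) powr p"
          by (intro divide_right_mono) auto
        then show ?thesis using False d dp B(1)
          by (simp add: abs_mult powr_minus_divide abs_divide)
      qed
    qed
  qed
qed


lemma Delta_FD_comb:
  "Delta_FD (\<lambda>y. w y - v y - c * b y) x h = Delta_FD w x h - Delta_FD v x h - c * Delta_FD b x h"
  unfolding Delta_FD_def sum_distrib_left sum_subtractf[symmetric]
  by (rule sum.cong) (auto simp: algebra_simps)

lemma frac_lap_comb:
  fixes w v b :: "real^'n \<Rightarrow> real"
  assumes iw: "integrable lebesgue (\<lambda>y. indicator (- Om x) y *\<^sub>R ((w x - w y) / norm (x - y) powr (real CARD('n) + 2 * s)))"
    and iv: "integrable lebesgue (\<lambda>y. indicator (- Om x) y *\<^sub>R ((v x - v y) / norm (x - y) powr (real CARD('n) + 2 * s)))"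
    and ib: "integrable lebesgue (\<lambda>y. indicator (- Om x) y *\<^sub>R ((b x - b y) / norm (x - y) powr (real CARD('n) + 2 * s)))"
  shows "frac_lap_h s \<kappa> H Om (\<lambda>y. w y - v y - c * b y) x
       = frac_lap_h s \<kappa> H Om w x - frac_lap_h s \<kappa> H Om v x - c * frac_lap_h s \<kappa> H Om b x"
proof -
  let ?P = "real CARD('n) + 2 * s"
  let ?I = "\<lambda>u. LINT y : - Om x | lebesgue. (u x - u y) / norm (x - y) powr ?P"
  have "?I (\<lambda>y. w y - v y - c * b y) = ?I w - ?I v - c * ?I b"
  proof -
    have eq: "(\<lambda>y. indicator (- Om x) y *\<^sub>R (((w x - v x - c * b x) - (w y - v y - c * b y)) / norm (x - y) powr ?P))
      = (\<lambda>y. indicator (- Om x) y *\<^sub>R ((w x - w y) / norm (x - y) powr ?P)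
           - indicator (- Om x) y *\<^sub>R ((v x - v y) / norm (x - y) powr ?P)
           - c * (indicator (- Om x) y *\<^sub>R ((b x - b y) / norm (x - y) powr ?P)))"
      by (rule ext) (simp add: indicator_def diff_divide_distrib add_divide_distrib algebra_simps)
    define F where "F u = (\<lambda>y. indicator (- Om x) y *\<^sub>R ((u x - u y) / norm (x - y) powr ?P))" for u :: "real^'n \<Rightarrow> real"
    have fw: "integrable lebesgue (F w)" and fv: "integrable lebesgue (F v)" and fb: "integrable lebesgue (F b)"
      using iw iv ib by (simp_all add: F_def)
    have "integral\<^sup>L lebesgue (\<lambda>y. F w y - F v y - c * F b y)
        = integral\<^sup>L lebesgue (\<lambda>y. F w y - F v y) - integral\<^sup>L lebesgue (\<lambda>y. c * F b y)"
      by (rule Bochner_Integration.integral_diff) (use fw fv fb in auto)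
    also have "\<dots> = integral\<^sup>L lebesgue (F w) - integral\<^sup>L lebesgue (F v) - c * integral\<^sup>L lebesgue (F b)"
      using fw fv fb by (simp add: Bochner_Integration.integral_diff)
    finally have *: "integral\<^sup>L lebesgue (\<lambda>y. F w y - F v y - c * F b y)
        = integral\<^sup>L lebesgue (F w) - integral\<^sup>L lebesgue (F v) - c * integral\<^sup>L lebesgue (F b)" .
    show ?thesis
      unfolding set_lebesgue_integral_def eq using * by (simp add: F_def)
  qed
  then show ?thesis
    unfolding frac_lap_h_def Delta_FD_comb by (simp add: algebra_simps diff_divide_distrib add_divide_distrib)
qed

lemma frac_lap_nonneg_at_max:
  fixes u :: "real^'n \<Rightarrow> real"
  assumes "\<And>y. u y \<le> u x" "\<kappa> x > 0" "H x > 0"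
  shows "frac_lap_h s \<kappa> H Om u x \<ge> 0"
proof -
  have "Delta_FD u x (H x) \<le> 0" unfolding Delta_FD_def
  proof (rule sum_nonpos)
    fix j
    have "u (x + H x *\<^sub>R axis j 1) \<le> u x" "u (x - H x *\<^sub>R axis j 1) \<le> u x" using assms(1) by auto
    then show "u (x + H x *\<^sub>R axis j 1) - 2 * u x + u (x - H x *\<^sub>R axis j 1) \<le> 0" by linarith
  qed
  then have a: "- \<kappa> x * Delta_FD u x (H x) / H x powr (2 * s) \<ge> 0"
    using assms(2) by (intro divide_nonneg_nonneg) (auto simp: mult_nonneg_nonpos)
  have b: "(LINT y : - Om x | lebesgue. (u x - u y) / norm (x - y) powr (real CARD('n) + 2 * s)) \<ge> 0"
    unfolding set_lebesgue_integral_def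
    by (rule Bochner_Integration.integral_nonneg) (use assms(1) in \<open>auto intro!: divide_nonneg_nonneg simp: indicator_def\<close>)
  show ?thesis unfolding frac_lap_h_def using a b by linarith
qed

lemma tri_facts:
  fixes \<T> :: "(real^'n) set set"
  assumes "conforming_triangulation \<Omega> \<T>"
  shows "finite \<T>" "\<And>T. T \<in> \<T> \<Longrightarrow> int CARD('n) simplex T" "\<Union>\<T> = closure \<Omega>"
  using assms unfolding conforming_triangulation_def by simp_all

lemma mesh_nodes_finite:
  fixes \<T> :: "(real^'n) set set"
  assumes "conforming_triangulation \<Omega> \<T>"
  shows "finite (mesh_nodes \<T>)"
proof -
  have "mesh_nodes \<T> = (\<Union>T\<in>\<T>. {x. x extreme_point_of T})" by (auto simp: mesh_nodes_def)
  moreover have "finite {x. x extreme_point_of T}" if "T \<in> \<T>" for T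
  proof -
    have "int CARD('n) simplex T" using tri_facts(2)[OF assms that] .
    then obtain C where C: "\<not> affine_dependent C" "int (card C) = int CARD('n) + 1" "T = convex hull C"
      unfolding simplex_def by blast
    have "int (card C) > 0" using C(2) by simp
    then have "card C > 0" by simp
    then have "finite C" by (simp add: card_gt_0_iff)
    moreover have "{x. x extreme_point_of T} \<subseteq> C" using C(3) extreme_point_of_convex_hull by blast
    ultimately show ?thesis by (rule finite_subset[rotated])
  qed
  moreover have "finite \<T>" using tri_facts(1)[OF assms] .
  ultimately show ?thesis by auto
qed

lemma vertex_max:
  fixes u :: "real^'n \<Rightarrow> real"
  assumes tri: "conforming_triangulation \<Omega> \<T>"
    and aff: "\<forall>T\<in>\<T>. \<exists>a c. \<forall>x\<in>T. u x = inner a x + c"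
    and zero: "\<forall>x. x \<notin> \<Omega> \<longrightarrow> u x = 0"
    and nodes: "\<And>z. z \<in> mesh_nodes \<T> \<Longrightarrow> u z \<le> m" and m: "m \<ge> 0"
  shows "u y \<le> m"
proof (cases "y \<in> \<Omega>")
  case False then show ?thesis using zero m by simp
next
  case True
  then have "y \<in> \<Union>\<T>" using closure_subset tri_facts(3)[OF tri] by blast
  then obtain T where T: "T \<in> \<T>" "y \<in> T" by blast
  have "int CARD('n) simplex T" using tri_facts(2)[OF tri T(1)] .
  then obtain C where C: "\<not> affine_dependent C" "T = convex hull C"
    unfolding simplex_def by blast
  obtain a c where ac: "\<forall>x\<in>T. u x = inner a x + c" using aff T(1) by blast
  have "C \<subseteq> {x. inner a x \<le> m - c}"
  proof
    fix z assume z: "z \<in> C"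
    then have "z extreme_point_of T" unfolding C(2) using extreme_point_of_convex_hull_affine_independent[OF C(1)] by simp
    then have "z \<in> mesh_nodes \<T>" using T(1) by (auto simp: mesh_nodes_def)
    then have "u z \<le> m" by (rule nodes)
    moreover have "z \<in> T" unfolding C(2) by (rule hull_inc[OF z])
    then have "u z = inner a z + c" using ac by blast
    ultimately show "z \<in> {x. inner a x \<le> m - c}" by simp
  qed
  then have "convex hull C \<subseteq> {x. inner a x \<le> m - c}"
    using convex_halfspace_le[of a "m - c"] by (rule hull_minimal)
  moreover have "y \<in> convex hull C" using T(2) C(2) by simp
  ultimately have "y \<in> {x. inner a x \<le> m - c}" by (rule subsetD)
  moreover have "u y = inner a y + c" using ac T(2) by blast
  ultimately show ?thesis by simp
qed


lemma Vh_comb: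
  assumes "w \<in> Vh \<Omega> \<T>" "v \<in> Vh \<Omega> \<T>" "b \<in> Vh \<Omega> \<T>"
  shows "(\<lambda>y. w y - v y - c * b y) \<in> Vh \<Omega> \<T>"
proof -
  have cont: "continuous_on UNIV (\<lambda>y. w y - v y - c * b y)"
    using assms by (intro continuous_intros) (auto simp: Vh_def)
  have aff: "\<forall>T\<in>\<T>. \<exists>a c'. \<forall>x\<in>T. w x - v x - c * b x = inner a x + c'"
  proof
    fix T assume T: "T \<in> \<T>"
    obtain a1 c1 where 1: "\<forall>x\<in>T. w x = inner a1 x + c1" using assms(1) T unfolding Vh_def by blast
    obtain a2 c2 where 2: "\<forall>x\<in>T. v x = inner a2 x + c2" using assms(2) T unfolding Vh_def by blast
    obtain a3 c3 where 3: "\<forall>x\<in>T. b x = inner a3 x + c3" using assms(3) T unfolding Vh_def by blast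
    show "\<exists>a c'. \<forall>x\<in>T. w x - v x - c * b x = inner a x + c'"
      by (rule exI[of _ "a1 - a2 - c *\<^sub>R a3"], rule exI[of _ "c1 - c2 - c * c3"])
         (use 1 2 3 in \<open>auto simp: inner_diff_left algebra_simps\<close>)
  qed
  show ?thesis using cont aff assms unfolding Vh_def by auto
qed

theorem lemma3p5:
  fixes \<Omega> :: "(real^'n) set" and \<T> :: "(real^'n) set set" and s :: real
    and H \<kappa> :: "real^'n \<Rightarrow> real" and Om :: "real^'n \<Rightarrow> (real^'n) set"
    and f \<psi> v w :: "real^'n \<Rightarrow> real"
  assumes "0 < s" "s < 1"
    and "lipschitz_domain \<Omega>" "exterior_ball_condition \<Omega>"
    and "conforming_triangulation \<Omega> \<T>"
    and "admissible_local_data \<Omega> \<T> H \<kappa> Om"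
    and barrier: "\<exists>b\<in>Vh \<Omega> \<T>. (\<forall>x\<in>interior_nodes \<Omega> \<T>. b x = 1) \<and>
        (\<exists>C>0. \<forall>x\<in>interior_nodes \<Omega> \<T>.
           frac_lap_h s \<kappa> H Om b x \<ge> C * infdist x (frontier \<Omega>) powr (- 2 * s))"
    and "v \<in> Vh \<Omega> \<T>" "w \<in> Vh \<Omega> \<T>"
    and "\<forall>x\<in>interior_nodes \<Omega> \<T>.
           obstacle_op_h s \<kappa> H Om f \<psi> v x \<ge> obstacle_op_h s \<kappa> H Om f \<psi> w x"
  shows "\<forall>x\<in>\<Omega>. v x \<ge> w x"
proof (rule ccontr)
  assume "\<not> (\<forall>x\<in>\<Omega>. v x \<ge> w x)"
  then obtain y0 where y0: "y0 \<in> \<Omega>" "v y0 < w y0" by (auto simp: not_le)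
  have tri: "conforming_triangulation \<Omega> \<T>" by fact
  have opn: "open \<Omega>" and bdd: "bounded \<Omega>" using assms(3) by (auto simp: lipschitz_domain_def)
  obtain b C where b: "b \<in> Vh \<Omega> \<T>" "\<forall>x\<in>interior_nodes \<Omega> \<T>. b x = 1" "C > 0"
    "\<forall>x\<in>interior_nodes \<Omega> \<T>. frac_lap_h s \<kappa> H Om b x \<ge> C * infdist x (frontier \<Omega>) powr (- 2 * s)"
    using barrier by blast
  let ?N = "mesh_nodes \<T>"
  define e where "e y = w y - v y - 0 * b y" for y
  have eVh: "e \<in> Vh \<Omega> \<T>" unfolding e_def using assms(9,8) b(1) by (rule Vh_comb)
  have evals: "e y = w y - v y" for y by (simp add: e_def)
  have fin: "finite ?N" using tri by (rule mesh_nodes_finite)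
  have "\<exists>z\<in>?N. e z > 0"
  proof (rule ccontr)
    assume "\<not> (\<exists>z\<in>?N. e z > 0)"
    then have "\<And>z. z \<in> ?N \<Longrightarrow> e z \<le> 0" by (auto simp: not_less)
    then have "e y0 \<le> 0" using vertex_max[OF tri, of e 0 y0] eVh by (auto simp: Vh_def)
    then show False using y0 by (simp add: evals)
  qed
  then have Nne: "?N \<noteq> {}" by auto
  define M where "M = Max (e ` ?N)"
  have "M \<in> e ` ?N" unfolding M_def using fin Nne by (intro Max_in) auto
  then obtain x0 where x0: "x0 \<in> ?N" "e x0 = M" by auto
  have Mge: "\<And>z. z \<in> ?N \<Longrightarrow> e z \<le> M" unfolding M_def using fin by auto
  have Mpos: "M > 0" using \<open>\<exists>z\<in>?N. e z > 0\<close> Mge by force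
  have fr_out: "z \<in> frontier \<Omega> \<Longrightarrow> z \<notin> \<Omega>" for z using opn by (simp add: frontier_def interior_open)
  have x0int: "x0 \<in> interior_nodes \<Omega> \<T>"
  proof -
    have "x0 \<notin> frontier \<Omega>"
    proof
      assume "x0 \<in> frontier \<Omega>"
      then have "e x0 = 0" using fr_out eVh by (auto simp: Vh_def)
      then show False using x0 Mpos by simp
    qed
    then show ?thesis using x0 by (simp add: interior_nodes_def)
  qed
  have x0Om: "x0 \<in> \<Omega>"
  proof -
    have "x0 \<in> \<Union>\<T>" using x0(1) by (auto simp: mesh_nodes_def extreme_point_of_def)
    then have "x0 \<in> closure \<Omega>" using tri_facts(3)[OF tri] by simp
    moreover have "x0 \<notin> frontier \<Omega>" using x0int by (simp add: interior_nodes_def)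
    ultimately show ?thesis using opn by (simp add: frontier_def interior_open)
  qed
  obtain loc: "H x0 > 0" "\<kappa> x0 > 0" "open (Om x0)" "x0 \<in> Om x0"
    using assms(6) x0int unfolding admissible_local_data_def by blast
  let ?L = "frac_lap_h s \<kappa> H Om"
  have vw: "v x0 < w x0" using x0 Mpos by (simp add: evals)
  have Lvw: "?L v x0 \<ge> ?L w x0"
  proof -
    have "min (?L v x0 - f x0) (v x0 - \<psi> x0) \<ge> min (?L w x0 - f x0) (w x0 - \<psi> x0)"
      using assms(10) x0int by (simp add: obstacle_op_h_def)
    then show ?thesis using vw by (auto simp: min_def split: if_splits)
  qed
  have fne: "frontier \<Omega> \<noteq> {}"
  proof -
    have "\<Omega> \<noteq> UNIV" using bdd not_bounded_UNIV by auto
    then show ?thesis using x0Om frontier_not_empty by blast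
  qed
  have "infdist x0 (frontier \<Omega>) \<noteq> 0"
    using in_closed_iff_infdist_zero[OF frontier_closed fne] fr_out x0Om by blast
  then have "infdist x0 (frontier \<Omega>) powr (- 2 * s) > 0" by simp
  then have "C * infdist x0 (frontier \<Omega>) powr (- 2 * s) > 0" using b(3) by (rule mult_pos_pos[rotated])
  then have Lb: "?L b x0 > 0" using b(4) x0int by force
  define u where "u y = w y - v y - (M/2) * b y" for y
  have uVh: "u \<in> Vh \<Omega> \<T>" unfolding u_def using assms(9,8) b(1) by (rule Vh_comb)
  have ux0: "u x0 = M/2" using x0 b(2) x0int by (simp add: u_def evals[symmetric])
  have umax: "u y \<le> u x0" for y
  proof -
    have "u y \<le> M/2"
    proof (rule vertex_max[OF tri])
      show "\<forall>T\<in>\<T>. \<exists>a c. \<forall>x\<in>T. u x = inner a x + c" "\<forall>x. x \<notin> \<Omega> \<longrightarrow> u x = 0"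
        using uVh by (auto simp: Vh_def)
      show "0 \<le> M/2" using Mpos by simp
      fix z assume z: "z \<in> ?N"
      show "u z \<le> M/2"
      proof (cases "z \<in> frontier \<Omega>")
        case True then have "u z = 0" using fr_out uVh by (auto simp: Vh_def)
        then show ?thesis using Mpos by simp
      next
        case False then have "z \<in> interior_nodes \<Omega> \<T>" using z by (simp add: interior_nodes_def)
        then have "u z = e z - M/2" using b(2) by (simp add: u_def evals)
        then show ?thesis using Mge[OF z] by simp
      qed
    qed
    then show ?thesis using ux0 by simp
  qed
  have Lu: "?L u x0 \<ge> 0" by (rule frac_lap_nonneg_at_max) (use umax loc in auto)
  have p: "real CARD('n) + 2 * s > real CARD('n)" using assms(1) by simp
  have "?L u x0 = ?L w x0 - ?L v x0 - (M/2) * ?L b x0"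
    unfolding u_def
    by (rule frac_lap_comb; rule integrand_integrable[OF _ bdd loc(3,4) p])
       (use assms(8,9) b(1) in auto)
  moreover have "(M/2) * ?L b x0 > 0" using Lb Mpos by simp
  ultimately have "?L u x0 < 0" using Lvw by linarith
  then show False using Lu by simp
qed

end
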